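(* Let $V=V_{\bar0}\oplus V_{\bar1}$ be an $\mathcal{L}$-module which is free of rank $2$ as a $\mathbb{C}[L_{0,0}]$-module, with homogeneous basis elements $1_{\bar0}\in V_{\bar0}$ and $1_{\bar1}\in V_{\bar1}$, so $V_{\bar0}=\mathbb{C}[L_{0,0}]1_{\bar0}$ and $V_{\bar1}=\mathbb{C}[L_{0,0}]1_{\bar1}$. Write $f(t)1_{\bar0}:=f(L_{0,0})1_{\bar0}$ and $g(x)1_{\bar1}:=g(L_{0,0})1_{\bar1}$ for polynomials $f,g$. Suppose $\lambda,\mu\in\mathbb{C}^*$ and $a,b,c,d\in\mathbb{C}$ are such that for all $f\in\mathbb{C}[t]$, $g\in\mathbb{C}[x]$, $m\in\mathbb{Z}$, $i\in\mathbb{Z}_+$: $L_{m,i}f(t)1_{\bar0}=\lambda^m(\delta_{i,0}(t-mqa)+\delta_{q,-1}\delta_{i,1}b)f(t-mq)1_{\bar0}$ and $L_{m,i}g(x)1_{\bar1}=\mu^m(\delta_{i,0}(x-mqc)+\delta_{q,-1}\delta_{i,1}d)g(x-mq)1_{\bar1}$. Then $\lambda=\mu$, $\delta_{q,-1}b=\delta_{q,-1}d$, and there exists $e\in\mathbb{C}^*$ such that one of the following holds: (i) $c=a+\frac12$, $G_{\frac12,0}1_{\bar0}=e1_{\bar1}$, $G_{\frac12,1}1_{\bar0}=0$, $G_{\frac12,1}1_{\bar1}=\frac{2q}{e}\lambda\delta_{q,-1}b1_{\bar0}$, $G_{\frac12,0}1_{\bar1}=\frac{q}{e}\lambda(t-qa)1_{\bar0}$;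 (ii) $c=a-\frac12$, $G_{\frac12,0}1_{\bar1}=e1_{\bar0}$, $G_{\frac12,1}1_{\bar1}=0$, $G_{\frac12,1}1_{\bar0}=\frac{2q}{e}\lambda\delta_{q,-1}b1_{\bar1}$, $G_{\frac12,0}1_{\bar0}=\frac{q}{e}\lambda(x-qa+\frac{q}{2})1_{\bar1}$.
   Context: Fix $q\in\mathbb{C}^*$; $\mathbb{Z}_+=\{0,1,2,\dots\}$; $\delta$ is the Kronecker delta. The Neveu-Schwarz-Block algebra $\mathcal{L}$ is the Lie superalgebra over $\mathbb{C}$ with even basis $\{L_{m,i}\mid m\in\mathbb{Z},i\in\mathbb{Z}_+\}$, odd basis $\{G_{l,j}\mid l\in\frac12+\mathbb{Z},j\in\mathbb{Z}_+\}$ and brackets $[L_{m,i},L_{n,j}]=(n(i+q)-m(j+q))L_{m+n,i+j}$, $[L_{m,i},G_{l,j}]=(l(i+q)-m(j+\frac{q}{2}))G_{m+l,i+j}$, $[G_{l,i},G_{r,j}]=2qL_{l+r,i+j}$. Modules are supermodules. Thus $L_{0,0}$ acts on $V_{\bar0}\cong\mathbb{C}[t]$ as multiplication by $t$ and on $V_{\bar1}\cong\mathbb{C}[x]$ as multiplication by $x$. *)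

theory Defs
  imports "HOL-Computational_Algebra.Polynomial"
begin

text \<open>Concrete model of a rank-2 free C[L_{0,0}]-supermodule:
  V = V0 (+) V1 with V0 = C[t] (first component, basis 1_0 = (1,0))
  and V1 = C[x] (second component, basis 1_1 = (0,1)).
  Odd generators are indexed by integers: G k j stands for G_{k+1/2, j}.\<close>

type_synonym V = "complex poly \<times> complex poly"

definition vadd :: "V \<Rightarrow> V \<Rightarrow> V" where
  "vadd u v = (fst u + fst v, snd u + snd v)"

definition vsub :: "V \<Rightarrow> V \<Rightarrow> V" where
  "vsub u v = (fst u - fst v, snd u - snd v)"

definition vsmult :: "complex \<Rightarrow> V \<Rightarrow> V" where
  "vsmult c u = (smult c (fst u), smult c (snd u))"

definition linear_op :: "(V \<Rightarrow> V) \<Rightarrow> bool" where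
  "linear_op T \<longleftrightarrow> (\<forall>u v. T (vadd u v) = vadd (T u) (T v)) \<and> (\<forall>c u. T (vsmult c u) = vsmult c (T u))"

text \<open>V is a module (supermodule) over the Neveu-Schwarz-Block algebra with parameter q:
  L m i is the action of L_{m,i} (even: preserves parity),
  G k j is the action of G_{k+1/2,j} (odd: swaps parity);
  even-even and even-odd brackets act as commutators, odd-odd as anticommutators.\<close>
definition NSB_module :: "complex \<Rightarrow> (int \<Rightarrow> nat \<Rightarrow> V \<Rightarrow> V) \<Rightarrow> (int \<Rightarrow> nat \<Rightarrow> V \<Rightarrow> V) \<Rightarrow> bool" where
  "NSB_module q L G \<longleftrightarrow>
     (\<forall>m i. linear_op (L m i)) \<and> (\<forall>k j. linear_op (G k j)) \<and>
     (\<forall>m i f. snd (L m i (f, 0)) = 0) \<and> (\<forall>m i g. fst (L m i (0, g)) = 0) \<and>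
     (\<forall>k j f. fst (G k j (f, 0)) = 0) \<and> (\<forall>k j g. snd (G k j (0, g)) = 0) \<and>
     (\<forall>m i n j v. vsub (L m i (L n j v)) (L n j (L m i v)) =
        vsmult (of_int n * (of_nat i + q) - of_int m * (of_nat j + q)) (L (m + n) (i + j) v)) \<and>
     (\<forall>m i k j v. vsub (L m i (G k j v)) (G k j (L m i v)) =
        vsmult ((of_int k + 1/2) * (of_nat i + q) - of_int m * (of_nat j + q/2)) (G (m + k) (i + j) v)) \<and>
     (\<forall>k i k' j v. vadd (G k i (G k' j v)) (G k' j (G k i v)) =
        vsmult (2 * q) (L (k + k' + 1) (i + j) v))"

definition kd :: "complex \<Rightarrow> complex \<Rightarrow> complex" where
  "kd u v = (if u = v then 1 else 0)"

end

theory Submission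
  imports Defs
begin

lemma lin_zero: "linear_op T \<Longrightarrow> T (0,0) = (0,0)"
proof -
  assume l: "linear_op T"
  have "T (vsmult 0 (0,0)) = vsmult 0 (T (0,0))" using l unfolding linear_op_def by blast
  then show ?thesis by (simp add: vsmult_def)
qed

lemma lin_const_e: "linear_op T \<Longrightarrow> T ([:c:],0) = vsmult c (T (1,0))"
proof -
  assume l: "linear_op T"
  have "T (vsmult c (1,0)) = vsmult c (T (1,0))" using l unfolding linear_op_def by blast
  then show ?thesis by (simp add: vsmult_def)
qed

lemma lin_const_o: "linear_op T \<Longrightarrow> T (0,[:c:]) = vsmult c (T (0,1))"
proof -
  assume l: "linear_op T"
  have "T (vsmult c (0,1)) = vsmult c (T (0,1))" using l unfolding linear_op_def by blast
  then show ?thesis by (simp add: vsmult_def)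
qed

lemma shift_odd:
  assumes lin: "linear_op T" and par: "\<And>g. snd (T (0,g)) = 0"
    and comm: "\<And>v. vsub (L0 (T v)) (T (L0 v)) = vsmult \<kappa> (T v)"
    and Le: "\<And>f. L0 (f,0) = ([:0,1:]*f, 0)" and Lo: "\<And>g. L0 (0,g) = (0,[:0,1:]*g)"
  shows "T (0,p) = (pcompose p [:-\<kappa>,1:] * fst (T (0,1)), 0)"
proof (induction p)
  case 0
  then show ?case using lin_zero[OF lin] by simp
next
  case (pCons a p)
  have e1: "(0, pCons a p) = vadd (vsmult a (0,1)) (L0 (0,p))"
    using Lo by (simp add: vadd_def vsmult_def)
  have e2: "T (0, pCons a p) = vadd (vsmult a (T (0,1))) (T (L0 (0,p)))"
    unfolding e1 using lin unfolding linear_op_def by (simp del: split_paired_All)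
  have e3: "T (L0 (0,p)) = vsub (L0 (T (0,p))) (vsmult \<kappa> (T (0,p)))"
    using comm[of "(0,p)"] by (auto simp: vsub_def prod_eq_iff eq_diff_eq diff_eq_eq)
  have t1: "T (0,1) = (fst (T (0,1)), 0)" using par[of 1] by (simp add: prod_eq_iff)
  show ?case
    unfolding e2 e3 pCons.IH
    apply (subst t1)
    by (simp add: vsub_def vadd_def vsmult_def Le pcompose_pCons algebra_simps)
qed

lemma shift_even:
  assumes lin: "linear_op T" and par: "\<And>g. fst (T (g,0)) = 0"
    and comm: "\<And>v. vsub (L0 (T v)) (T (L0 v)) = vsmult \<kappa> (T v)"
    and Le: "\<And>f. L0 (f,0) = ([:0,1:]*f, 0)" and Lo: "\<And>g. L0 (0,g) = (0,[:0,1:]*g)"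
  shows "T (p,0) = (0, pcompose p [:-\<kappa>,1:] * snd (T (1,0)))"
proof (induction p)
  case 0
  then show ?case using lin_zero[OF lin] by simp
next
  case (pCons a p)
  have e1: "(pCons a p, 0) = vadd (vsmult a (1,0)) (L0 (p,0))"
    using Le by (simp add: vadd_def vsmult_def)
  have e2: "T (pCons a p, 0) = vadd (vsmult a (T (1,0))) (T (L0 (p,0)))"
    unfolding e1 using lin unfolding linear_op_def by (simp del: split_paired_All)
  have e3: "T (L0 (p,0)) = vsub (L0 (T (p,0))) (vsmult \<kappa> (T (p,0)))"
    using comm[of "(p,0)"] by (auto simp: vsub_def prod_eq_iff eq_diff_eq diff_eq_eq)
  have t1: "T (1,0) = (0, snd (T (1,0)))" using par[of 1] by (simp add: prod_eq_iff)
  show ?case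
    unfolding e2 e3 pCons.IH
    apply (subst t1)
    by (simp add: vsub_def vadd_def vsmult_def Lo pcompose_pCons algebra_simps)
qed

lemma deg1: "degree (p::complex poly) \<le> 1 \<Longrightarrow> p = [:coeff p 0, coeff p 1:]"
  apply (rule poly_eqI)
  subgoal for n by (cases n; cases "n - 1") (auto simp: coeff_eq_0 coeff_pCons)
  done

lemma half: "(X::complex poly) + X = smult 2 Y \<Longrightarrow> X = Y"
  by (simp add: poly_eq_iff) (metis mult_2 coeff_add coeff_smult mult_cancel_left zero_neq_numeral)

lemma c1: fixes a0 a1 b0 b1 q lam mu a c :: complex
  assumes hq: "q \<noteq> 0" and hlam: "lam \<noteq> 0" and a1: "a1 = 0"
  and C1: "a1 * b1 = 0 \<and> (a0 - a1*q/2) * b1 + a1 * b0 = q*lam \<and> (a0 - a1*q/2) * b0 = - (q*lam*(q*a))"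
  and C2: "a1 * b1 = 0 \<and> (b0 - b1*q/2) * a1 + b1 * a0 = q*mu \<and> (b0 - b1*q/2) * a0 = - (q*mu*(q*c))"
  shows "a0 \<noteq> 0 \<and> lam = mu \<and> c = a + 1/2 \<and> b1 = q/a0*lam \<and> b0 = q/a0*lam*(-(q*a))"
proof -
  have e1: "a0*b1 = q*lam" and e2: "a0*b0 = -(q*lam*(q*a))" and e3: "b1*a0 = q*mu"
    and e4: "(b0 - b1*q/2) * a0 = - (q*mu*(q*c))" using C1 C2 a1 by auto
  have a0: "a0 \<noteq> 0" using e1 hq hlam by auto
  have lm: "lam = mu" using e1 e3 hq by (simp add: mult.commute)
  have "q*lam*q*(2*c - 2*a - 1) = 0" using e1 e2 e4 lm by algebra
  then have "2*c - 2*a - 1 = 0" using hq hlam by simp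
  then have "c = a + 1/2" by (simp add: field_simps)
  moreover have "b1 = q/a0*lam" "b0 = q/a0*lam*(-(q*a))" using e1 e2 a0 by (simp_all add: field_simps)
  ultimately show ?thesis using a0 lm by simp
qed
lemma c2: fixes a0 a1 b0 b1 q lam mu a c :: complex
  assumes hq: "q \<noteq> 0" and hlam: "lam \<noteq> 0" and b1: "b1 = 0"
  and C1: "a1 * b1 = 0 \<and> (a0 - a1*q/2) * b1 + a1 * b0 = q*lam \<and> (a0 - a1*q/2) * b0 = - (q*lam*(q*a))"
  and C2: "a1 * b1 = 0 \<and> (b0 - b1*q/2) * a1 + b1 * a0 = q*mu \<and> (b0 - b1*q/2) * a0 = - (q*mu*(q*c))"
  shows "b0 \<noteq> 0 \<and> lam = mu \<and> c = a - 1/2 \<and> a1 = q/b0*lam \<and> a0 = q/b0*lam*(-(q*a) + q/2)"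
proof -
  have e1: "a1*b0 = q*lam" and e2: "(a0 - a1*q/2)*b0 = -(q*lam*(q*a))" and e3: "b0*a1 = q*mu"
    and e4: "b0 * a0 = - (q*mu*(q*c))" using C1 C2 b1 by auto
  have b0: "b0 \<noteq> 0" using e1 hq hlam by auto
  have lm: "lam = mu" using e1 e3 hq by (simp add: mult.commute)
  have "q*lam*q*(2*c - 2*a + 1) = 0" using e1 e2 e4 lm by algebra
  then have "2*c - 2*a + 1 = 0" using hq hlam by simp
  then have c: "c = a - 1/2" by (simp add: field_simps)
  moreover have "a1 = q/b0*lam" using e1 b0 by (simp add: field_simps)
  moreover have "a0 = q/b0*lam*(-(q*a) + q/2)" using e4 b0 lm c by (simp add: field_simps)
  ultimately show ?thesis using b0 lm by simp
qed

lemma pc_const: assumes "degree (p0::complex poly) = 1" "e \<noteq> 0" "pcompose X p0 * [:e:] = [:r:]"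
  shows "X = [:r/e:]"
proof -
  have "smult e (pcompose X p0) = [:r:]" using assms(3) by (simp add: mult.commute)
  moreover have "pcompose X p0 = smult (inverse e) (smult e (pcompose X p0))" using assms(2) by simp
  ultimately have h: "pcompose X p0 = [:r/e:]" by (simp add: field_simps)
  then have "degree X = 0" using degree_pcompose[of X p0] assms(1) by simp
  then have "X = [:coeff X 0:]" by (metis degree_0_id)
  then show ?thesis using h by (metis pcompose_const)
qed

theorem lemma5p1:
  fixes q lam mu a b c d :: complex
    and L G :: "int \<Rightarrow> nat \<Rightarrow> V \<Rightarrow> V"
  assumes hq: "q \<noteq> 0" and hlam: "lam \<noteq> 0" and hmu: "mu \<noteq> 0"
    and hmod: "NSB_module q L G"
    and hL0: "\<And>m i f. L m i (f, 0) =
       (smult (lam powi m)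
          (([:kd (of_nat i) 0 * (- (of_int m * q * a)), kd (of_nat i) 0:]
            + [:kd q (-1) * kd (of_nat i) 1 * b:])
           * pcompose f [:- (of_int m * q), 1:]), 0)"
    and hL1: "\<And>m i g. L m i (0, g) =
       (0, smult (mu powi m)
          (([:kd (of_nat i) 0 * (- (of_int m * q * c)), kd (of_nat i) 0:]
            + [:kd q (-1) * kd (of_nat i) 1 * d:])
           * pcompose g [:- (of_int m * q), 1:]))"
  shows "lam = mu \<and> kd q (-1) * b = kd q (-1) * d \<and>
    (\<exists>e. e \<noteq> 0 \<and>
      ((c = a + 1/2 \<and>
        G 0 0 (1, 0) = (0, [:e:]) \<and>
        G 0 1 (1, 0) = (0, 0) \<and>
        G 0 1 (0, 1) = ([:2 * q / e * lam * kd q (-1) * b:], 0) \<and>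
        G 0 0 (0, 1) = (smult (q / e * lam) [:- (q * a), 1:], 0))
     \<or>
       (c = a - 1/2 \<and>
        G 0 0 (0, 1) = ([:e:], 0) \<and>
        G 0 1 (0, 1) = (0, 0) \<and>
        G 0 1 (1, 0) = (0, [:2 * q / e * lam * kd q (-1) * b:]) \<and>
        G 0 0 (1, 0) = (0, smult (q / e * lam) [:- (q * a) + q / 2, 1:]))))"
proof -
  have linL: "\<And>m i. linear_op (L m i)" and linG: "\<And>k j. linear_op (G k j)"
    and parGe: "\<And>k j f. fst (G k j (f, 0)) = 0" and parGo: "\<And>k j g. snd (G k j (0, g)) = 0"
    using hmod unfolding NSB_module_def by (simp_all del: split_paired_All)
  have commLG: "\<And>m i k j v. vsub (L m i (G k j v)) (G k j (L m i v)) =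
        vsmult ((of_int k + 1/2) * (of_nat i + q) - of_int m * (of_nat j + q/2)) (G (m + k) (i + j) v)"
    using hmod unfolding NSB_module_def by (simp del: split_paired_All)
  have anti: "\<And>k i k' j v. vadd (G k i (G k' j v)) (G k' j (G k i v)) =
        vsmult (2 * q) (L (k + k' + 1) (i + j) v)"
    using hmod unfolding NSB_module_def by (simp del: split_paired_All)
  have L00e: "\<And>f. L 0 0 (f,0) = ([:0,1:]*f, 0)" using hL0[of 0 0] by (simp add: kd_def)
  have L00o: "\<And>f. L 0 0 (0,f) = (0,[:0,1:]*f)" using hL1[of 0 0] by (simp add: kd_def)
  have L10e: "L 1 0 (1,0) = (smult lam [:-(q*a),1:], 0)" using hL0[of 1 0 1] by (simp add: kd_def pcompose_1)
  have L10o: "L 1 0 (0,1) = (0, smult mu [:-(q*c),1:])" using hL1[of 1 0 1] by (simp add: kd_def pcompose_1)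
  define p0 where "p0 = [:-(q/2),1:]"
  have comm0: "\<And>j v. vsub (L 0 0 (G 0 j v)) (G 0 j (L 0 0 v)) = vsmult (q/2) (G 0 j v)"
    using commLG[of 0 0 0] by simp
  have GAe: "\<And>j f. G 0 j (f,0) = (0, pcompose f p0 * snd (G 0 j (1,0)))"
    unfolding p0_def by (rule shift_even[OF linG parGe comm0 L00e L00o])
  have GBo: "\<And>j f. G 0 j (0,f) = (pcompose f p0 * fst (G 0 j (0,1)), 0)"
    unfolding p0_def by (rule shift_odd[OF linG parGo comm0 L00e L00o])
  define A where "A = snd (G 0 0 (1,0))"
  define B where "B = fst (G 0 0 (0,1))"
  define C where "C = snd (G 0 1 (1,0))"
  define D where "D = fst (G 0 1 (0,1))"
  have GA: "G 0 0 (1,0) = (0,A)" using parGe[of 0 0 1] unfolding A_def by (simp add: prod_eq_iff)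
  have GB: "G 0 0 (0,1) = (B,0)" using parGo[of 0 0 1] unfolding B_def by (simp add: prod_eq_iff)
  have GC: "G 0 1 (1,0) = (0,C)" using parGe[of 0 1 1] unfolding C_def by (simp add: prod_eq_iff)
  have GD: "G 0 1 (0,1) = (D,0)" using parGo[of 0 1 1] unfolding D_def by (simp add: prod_eq_iff)
  have GAe0: "\<And>f. G 0 0 (f,0) = (0, pcompose f p0 * A)" using GAe[of 0] unfolding A_def[symmetric] .
  have GAe1: "\<And>f. G 0 1 (f,0) = (0, pcompose f p0 * C)" using GAe[of 1] unfolding C_def[symmetric] .
  have GBo0: "\<And>f. G 0 0 (0,f) = (pcompose f p0 * B, 0)" using GBo[of 0] unfolding B_def[symmetric] .
  have GBo1: "\<And>f. G 0 1 (0,f) = (pcompose f p0 * D, 0)" using GBo[of 1] unfolding D_def[symmetric] .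
  have "vadd (G 0 0 (G 0 0 (1,0))) (G 0 0 (G 0 0 (1,0))) = vsmult (2 * q) (L 1 0 (1,0))"
    using anti[of 0 0 0 0 "(1,0)"] by simp
  then have E1': "pcompose A p0 * B + pcompose A p0 * B = smult (2*q) (smult lam [:-(q*a),1:])"
    unfolding GA GBo0[of A] L10e by (simp add: vadd_def vsmult_def B_def)
  have "vadd (G 0 0 (G 0 0 (0,1))) (G 0 0 (G 0 0 (0,1))) = vsmult (2 * q) (L 1 0 (0,1))"
    using anti[of 0 0 0 0 "(0,1)"] by simp
  then have E2': "pcompose B p0 * A + pcompose B p0 * A = smult (2*q) (smult mu [:-(q*c),1:])"
    unfolding GB GAe0[of B] L10o by (simp add: vadd_def vsmult_def A_def)
  have E1: "pcompose A p0 * B = smult (q*lam) [:-(q*a),1:]"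
    by (rule half) (use E1' in \<open>simp add: smult_smult mult.assoc\<close>)
  have E2: "pcompose B p0 * A = smult (q*mu) [:-(q*c),1:]"
    by (rule half) (use E2' in \<open>simp add: smult_smult mult.assoc\<close>)
  have P1: "smult (q*lam) [:-(q*a),1:] \<noteq> 0" using hq hlam by simp
  have Ane: "pcompose A p0 \<noteq> 0" and Bne: "B \<noteq> 0" using E1 P1 by auto
  have dp0: "degree p0 = 1" unfolding p0_def by simp
  have "degree (pcompose A p0) + degree B = 1"
    using E1 degree_mult_eq[OF Ane Bne] hq hlam by simp
  then have dA: "degree A \<le> 1" and dB: "degree B \<le> 1"
    using degree_pcompose[of A p0] dp0 by auto
  obtain a0 a1 where Aeq: "A = [:a0,a1:]" using deg1[OF dA] by blast
  obtain b0 b1 where Beq: "B = [:b0,b1:]" using deg1[OF dB] by blast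
  have C1: "a1 * b1 = 0 \<and> (a0 - a1*q/2) * b1 + a1 * b0 = q*lam \<and> (a0 - a1*q/2) * b0 = - (q*lam*(q*a))"
    using E1 unfolding Aeq Beq p0_def by (simp add: pcompose_pCons algebra_simps)
  have C2: "a1 * b1 = 0 \<and> (b0 - b1*q/2) * a1 + b1 * a0 = q*mu \<and> (b0 - b1*q/2) * a0 = - (q*mu*(q*c))"
    using E2 unfolding Aeq Beq p0_def by (simp add: pcompose_pCons algebra_simps)
  define k where "k = kd q (-1)"
  have L01e: "\<And>f. L 0 1 (f,0) = (smult (k*b) f, 0)" using hL0[of 0 1] by (simp add: kd_def k_def)
  have L01o: "\<And>f. L 0 1 (0,f) = (0, smult (k*d) f)" using hL1[of 0 1] by (simp add: kd_def k_def)
  have comm01: "\<And>v. vsub (L 0 1 (G 0 0 v)) (G 0 0 (L 0 1 v)) = vsmult ((1+q)/2) (G 0 1 v)"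
    using commLG[of 0 1 0 0] by (simp add: algebra_simps)
  have "smult (k*d) A - pcompose (smult (k*b) 1) p0 * A = smult ((1+q)/2) C"
    using comm01[of "(1,0)"] unfolding GA L01o  L01e GAe0 GC
    by (simp add: vsub_def vsmult_def pcompose_1)
  then have EC: "smult (k*(d-b)) A = smult ((1+q)/2) C" by (simp add: algebra_simps smult_diff_left)
  have "smult (k*b) B - pcompose (smult (k*d) 1) p0 * B = smult ((1+q)/2) D"
    using comm01[of "(0,1)"] unfolding GB L01e  L01o GBo0 GD
    by (simp add: vsub_def vsmult_def pcompose_1)
  then have ED: "smult (k*(b-d)) B = smult ((1+q)/2) D" by (simp add: algebra_simps smult_diff_left)
  have Ann: "A \<noteq> 0" using Ane by auto
  have bd: "k*b = k*d"
  proof (cases "q = -1")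
    case True
    then have "smult (d-b) A = 0" using EC by (simp add: k_def kd_def)
    then show ?thesis using Ann by simp
  next
    case False
    then show ?thesis by (simp add: k_def kd_def)
  qed
  have CD0: "C = 0 \<and> D = 0" if "q \<noteq> -1"
  proof -
    have k0: "k = 0" using that by (simp add: k_def kd_def)
    have "(1+q)/2 \<noteq> 0" using that by (simp add: add_eq_0_iff)
    then show ?thesis using EC ED k0 by simp
  qed
  have commM: "\<And>v. vsub (L (-1) 0 (G 0 0 v)) (G 0 0 (L (-1) 0 v)) = vsmult q (G (-1) 0 v)"
    using commLG[of "-1" 0 0 0] by (simp add: algebra_simps)
  have comm11: "\<And>v. q = -1 \<Longrightarrow> vsub (L 1 1 (G (-1) 0 v)) (G (-1) 0 (L 1 1 v)) = vsmult (1/2) (G 0 1 v)"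
    using commLG[of 1 1 "-1" 0] by simp
  have LMe: "L (-1) 0 (1,0) = (smult (inverse lam) [:q*a,1:], 0)" using hL0[of "-1" 0 1] by (simp add: kd_def pcompose_1)
  have LMo: "L (-1) 0 (0,1) = (0, smult (inverse mu) [:q*c,1:])" using hL1[of "-1" 0 1] by (simp add: kd_def pcompose_1)
  have L11e: "L 1 1 (1,0) = ([:lam*k*b:], 0)" using hL0[of 1 1 1] by (simp add: kd_def k_def pcompose_1)
  have L11o: "L 1 1 (0,1) = (0, [:mu*k*d:])" using hL1[of 1 1 1] by (simp add: kd_def k_def pcompose_1)
  have anti01: "\<And>v. vadd (G 0 0 (G 0 1 v)) (G 0 1 (G 0 0 v)) = vsmult (2*q) (L 1 1 v)"
    using anti[of 0 0 0 1] by simp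
  have "a1 = 0 \<or> b1 = 0" using C1 by simp
  then show ?thesis
  proof
    assume a1: "a1 = 0"
    note cc = c1[OF hq hlam a1 C1 C2]
    define e where "e = a0"
    have e0: "e \<noteq> 0" and lm: "lam = mu" and cv: "c = a + 1/2" and Bv: "B = smult (q/e*lam) [:-(q*a),1:]"
      using cc Beq unfolding e_def by auto
    have Av: "A = [:e:]" using Aeq a1 e_def by simp
    have C0: "C = 0"
    proof (cases "q = -1")
      case False then show ?thesis using CD0 by simp
    next
      case True
      obtain Y where GY: "G (-1) 0 (1,0) = (0,Y)" using parGe[of "-1" 0 1] by (metis prod.collapse)
      have "vsub (L (-1) 0 (0,[:e:])) (G 0 0 (smult (inverse lam) [:q*a,1:], 0)) = (0, smult q Y)"
        using commM[of "(1,0)"] unfolding GA Av LMe GY by (simp add: vsmult_def)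
      then have h1: "smult e (smult (inverse mu) [:q*c,1:]) - pcompose (smult (inverse lam) [:q*a,1:]) p0 * [:e:] = smult q Y"
        unfolding lin_const_o[OF linL] LMo GAe0 by (simp add: vsub_def vsmult_def A_def[symmetric] Av)
      have h2: "smult e (smult (inverse mu) [:q*c,1:]) - pcompose (smult (inverse lam) [:q*a,1:]) p0 * [:e:] = [:e*q/lam:]"
        unfolding lm[symmetric] cv p0_def using hlam
        by (simp add: pcompose_pCons field_simps)
      have "smult q Y = [:e*q/lam:]" using h1 h2 by simp
      then have "smult (inverse q) (smult q Y) = [:e/lam:]" using hq by simp
      then have Yv: "Y = [:e/lam:]" using hq by simp
      have "vsub (L 1 1 (0,Y)) (G (-1) 0 ([:lam*k*b:],0)) = vsmult (1/2) (0,C)"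
        using comm11[OF True, of "(1,0)"] unfolding GY L11e GC by simp
      then have h3: "smult (e/lam) [:mu*k*d:] - smult (lam*k*b) [:e/lam:] = smult (1/2) C"
        unfolding Yv lin_const_o[OF linL] lin_const_e[OF linG] L11o GY[unfolded Yv]
        by (simp add: vsub_def vsmult_def)
      have h4: "smult (e/lam) [:mu*k*d:] - smult (lam*k*b) [:e/lam:] = 0"
        using lm bd hlam by (auto simp: field_simps)
      have "smult (1/2) C = 0" using h3 h4 by simp
      then show ?thesis by simp
    qed
    have "vadd (G 0 0 (D,0)) (G 0 1 (B,0)) = vsmult (2*q) (0, [:mu*k*d:])"
      using anti01[of "(0,1)"] unfolding GD GB L11o .
    then have "pcompose D p0 * [:e:] = [:2*q*mu*k*d:]"
      unfolding GAe0[of D] GAe1[of B] A_def[symmetric] C_def[symmetric] C0 Av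
      by (simp add: vadd_def vsmult_def)
    from pc_const[OF dp0 e0 this] have Dv: "D = [:2*q/e*lam*k*b:]" using lm bd
      by (auto simp: field_simps)
    show ?thesis
      apply (rule conjI, fact lm)
      apply (rule conjI, use bd k_def in simp)
      apply (rule exI[of _ e])
      using e0 cv GA GB GC GD Av Bv Dv C0 unfolding k_def by simp
  next
    assume b1: "b1 = 0"
    note cc = c2[OF hq hlam b1 C1 C2]
    define e where "e = b0"
    have e0: "e \<noteq> 0" and lm: "lam = mu" and cv: "c = a - 1/2" and Av: "A = smult (q/e*lam) [:-(q*a) + q/2,1:]"
      using cc Aeq unfolding e_def by auto
    have Bv: "B = [:e:]" using Beq b1 e_def by simp
    have D0: "D = 0"
    proof (cases "q = -1")
      case False then show ?thesis using CD0 by simp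
    next
      case True
      obtain Y where GY: "G (-1) 0 (0,1) = (Y,0)" using parGo[of "-1" 0 1] by (metis prod.collapse)
      have "vsub (L (-1) 0 ([:e:],0)) (G 0 0 (0, smult (inverse mu) [:q*c,1:])) = (smult q Y, 0)"
        using commM[of "(0,1)"] unfolding GB Bv LMo GY by (simp add: vsmult_def)
      then have h1: "smult e (smult (inverse lam) [:q*a,1:]) - pcompose (smult (inverse mu) [:q*c,1:]) p0 * [:e:] = smult q Y"
        unfolding lin_const_e[OF linL] LMe GBo0 by (simp add: vsub_def vsmult_def B_def[symmetric] Bv)
      have h2: "smult e (smult (inverse lam) [:q*a,1:]) - pcompose (smult (inverse mu) [:q*c,1:]) p0 * [:e:] = [:e*q/lam:]"
        unfolding lm[symmetric] cv p0_def using hlam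
        by (simp add: pcompose_pCons field_simps)
      have "smult q Y = [:e*q/lam:]" using h1 h2 by simp
      then have "smult (inverse q) (smult q Y) = [:e/lam:]" using hq by simp
      then have Yv: "Y = [:e/lam:]" using hq by simp
      have "vsub (L 1 1 (Y,0)) (G (-1) 0 (0,[:mu*k*d:])) = vsmult (1/2) (D,0)"
        using comm11[OF True, of "(0,1)"] unfolding GY L11o GD by simp
      then have h3: "smult (e/lam) [:lam*k*b:] - smult (mu*k*d) [:e/lam:] = smult (1/2) D"
        unfolding Yv lin_const_e[OF linL] lin_const_o[OF linG] L11e GY[unfolded Yv]
        by (simp add: vsub_def vsmult_def)
      have h4: "smult (e/lam) [:lam*k*b:] - smult (mu*k*d) [:e/lam:] = 0"
        using lm bd hlam by (auto simp: field_simps)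
      have "smult (1/2) D = 0" using h3 h4 by simp
      then show ?thesis by simp
    qed
    have "vadd (G 0 0 (0,C)) (G 0 1 (0,A)) = vsmult (2*q) ([:lam*k*b:], 0)"
      using anti01[of "(1,0)"] unfolding GC GA L11e .
    then have "pcompose C p0 * [:e:] = [:2*q*lam*k*b:]"
      unfolding GBo0[of C] GBo1[of A] B_def[symmetric] D_def[symmetric] D0 Bv
      by (simp add: vadd_def vsmult_def)
    from pc_const[OF dp0 e0 this] have Cv: "C = [:2*q/e*lam*k*b:]"
      by (simp add: field_simps)
    show ?thesis
      apply (rule conjI, fact lm)
      apply (rule conjI, use bd k_def in simp)
      apply (rule exI[of _ e])
      using e0 cv GA GB GC GD Av Bv Cv D0 unfolding k_def by simp
  qed
qed
end
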